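(* Let $d\ge 0$ and $n>d$ be integers, and let $T\in L(n,d)$ with $T\neq\emptyset$. Then the poset ideal $\mathcal{I}_{n,d}(T)$ is isomorphic as a poset to the direct product $\prod_{T_i\in T}\mathcal{I}_{n,d}(\{T_i\})$, and both are isomorphic as posets to $\prod_{T_i\in T} L(n-|T_i|,\,d-|T_i|)$.
   Context: For a finite set $X$ let $\operatorname{codim}_d(X)=d+1-|X|$. For a finite collection $\{T_1,\dots,T_l\}$ of pairwise distinct finite sets put $\rho_d(\{T_1,\dots,T_l\})=\sum_{i=1}^l\operatorname{codim}_d(T_i)$ (with $\rho_d(\emptyset)=0$) and $D_d(\{T_1,\dots,T_l\})=\operatorname{codim}_d(T_1\cap\cdots\cap T_l)-\rho_d(\{T_1,\dots,T_l\})$. For integers $d\ge0$, $n>d$, $L(n,d)$ is the set of all collections $T$ of subsets of $\{1,\dots,n\}$ such that (i) $D_d(T')>0$ for every $T'\subset T$ with $|T'|>1$, and (ii) $0\le|T_i|\le d$ for every $T_i\in T$ (so $L(n,0)=\{\emptyset,\{\emptyset\}\}$). It is partially ordered by: $T<T'$ iff $\rho_d(T)<\rho_d(T')$ and for every $T_i\in T$ there exists $T'_j\in T'$ with $T'_j\subset T_i$; $T\le T'$ means $T<T'$ or $T=T'$. For $T\in L(n,d)$, $\mathcal{I}_{n,d}(T)=\{S\in L(n,d): S\le T\}$ with the induced order. Direct products of posets carry the componentwise order. *)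

theory Defs
  imports Main "HOL-Library.FuncSet"
begin

definition codim :: "nat \<Rightarrow> nat set \<Rightarrow> int" where
  "codim d X = int d + 1 - int (card X)"

definition rho :: "nat \<Rightarrow> nat set set \<Rightarrow> int" where
  "rho d T = (\<Sum>X\<in>T. codim d X)"

definition Dd :: "nat \<Rightarrow> nat set set \<Rightarrow> int" where
  "Dd d T = codim d (\<Inter>T) - rho d T"

definition Lset :: "nat \<Rightarrow> nat \<Rightarrow> nat set set set" where
  "Lset n d = {T. T \<subseteq> Pow {1..n}
                  \<and> (\<forall>T'. T' \<subseteq> T \<and> card T' > 1 \<longrightarrow> Dd d T' > 0)
                  \<and> (\<forall>X\<in>T. card X \<le> d)}"

definition lessL :: "nat \<Rightarrow> nat set set \<Rightarrow> nat set set \<Rightarrow> bool" where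
  "lessL d S T \<longleftrightarrow> rho d S < rho d T \<and> (\<forall>X\<in>S. \<exists>Y\<in>T. Y \<subseteq> X)"

definition leqL :: "nat \<Rightarrow> nat set set \<Rightarrow> nat set set \<Rightarrow> bool" where
  "leqL d S T \<longleftrightarrow> lessL d S T \<or> S = T"

definition idealL :: "nat \<Rightarrow> nat \<Rightarrow> nat set set \<Rightarrow> nat set set set" where
  "idealL n d T = {S \<in> Lset n d. leqL d S T}"

definition prod_le :: "'i set \<Rightarrow> ('i \<Rightarrow> 'a \<Rightarrow> 'a \<Rightarrow> bool) \<Rightarrow> ('i \<Rightarrow> 'a) \<Rightarrow> ('i \<Rightarrow> 'a) \<Rightarrow> bool" where
  "prod_le I le f g \<longleftrightarrow> (\<forall>i\<in>I. le i (f i) (g i))"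

definition poset_iso :: "'a set \<Rightarrow> ('a \<Rightarrow> 'a \<Rightarrow> bool) \<Rightarrow> 'b set \<Rightarrow> ('b \<Rightarrow> 'b \<Rightarrow> bool) \<Rightarrow> bool" where
  "poset_iso A ra B rb \<longleftrightarrow>
     (\<exists>f. bij_betw f A B \<and> (\<forall>x\<in>A. \<forall>y\<in>A. ra x y \<longleftrightarrow> rb (f x) (f y)))"

end

theory Submission
  imports Defs
begin


definition cover :: "nat set set \<Rightarrow> nat set set \<Rightarrow> bool" where
  "cover S S' \<longleftrightarrow> (\<forall>a\<in>S. \<exists>b\<in>S'. b \<subseteq> a)"

lemma Lset_finite: "T \<in> Lset n d \<Longrightarrow> finite T"
  unfolding Lset_def by (auto intro: finite_subset)

lemma Lset_elem: "T \<in> Lset n d \<Longrightarrow> X \<in> T \<Longrightarrow> X \<subseteq> {1..n} \<and> finite X \<and> card X \<le> d"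
  unfolding Lset_def by (auto intro: finite_subset)

lemma Lset_subset: "T \<in> Lset n d \<Longrightarrow> S \<subseteq> T \<Longrightarrow> S \<in> Lset n d"
  unfolding Lset_def by blast

lemma Lset_D: "T \<in> Lset n d \<Longrightarrow> T' \<subseteq> T \<Longrightarrow> card T' > 1 \<Longrightarrow> Dd d T' > 0"
  unfolding Lset_def by blast

lemma Lset_pair:
  assumes "T \<in> Lset n d" "X \<in> T" "Y \<in> T" "X \<noteq> Y"
  shows "card (X \<union> Y) > d + 1"
proof -
  have "Dd d {X, Y} > 0" using Lset_D[OF assms(1), of "{X,Y}"] assms by auto
  moreover have "rho d {X,Y} = codim d X + codim d Y" using assms(4) by (simp add: rho_def)
  moreover have "finite X" "finite Y" using Lset_elem assms by blast+
  hence "card X + card Y = card (X \<union> Y) + card (X \<inter> Y)" by (rule card_Un_Int)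
  ultimately show ?thesis unfolding Dd_def codim_def by simp
qed

lemma Lset_uniq:
  assumes "T \<in> Lset n d" "X \<in> T" "Y \<in> T" "X \<subseteq> a" "Y \<subseteq> a" "finite a" "card a \<le> d"
  shows "X = Y"
proof (rule ccontr)
  assume "X \<noteq> Y"
  hence "card (X \<union> Y) > d + 1" using Lset_pair assms by blast
  moreover have "card (X \<union> Y) \<le> card a" using assms by (intro card_mono) auto
  ultimately show False using assms by simp
qed

lemma rho_le_inter:
  assumes "A \<in> Lset n d" "A \<noteq> {}"
  shows "rho d A \<le> codim d (\<Inter>A)" and "card A > 1 \<Longrightarrow> rho d A < codim d (\<Inter>A)"
proof -
  show "card A > 1 \<Longrightarrow> rho d A < codim d (\<Inter>A)"
    using Lset_D[OF assms(1), of A] by (simp add: Dd_def)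
  have "finite A" using Lset_finite assms by blast
  show "rho d A \<le> codim d (\<Inter>A)"
  proof (cases "card A > 1")
    case True then show ?thesis using Lset_D[OF assms(1), of A] by (simp add: Dd_def)
  next
    case False
    with assms \<open>finite A\<close> have "card A = 1" by (metis One_nat_def card_0_eq less_one linorder_neqE_nat)
    then obtain a where "A = {a}" by (auto simp: card_Suc_eq)
    then show ?thesis by (simp add: rho_def)
  qed
qed

lemma group_lemma:
  assumes "A \<in> Lset n d" "finite b" "card b \<le> d" "\<forall>a\<in>A. b \<subseteq> a"
  shows "A = {b} \<or> rho d A < codim d b"
proof -
  have fA: "finite A" using Lset_finite assms by blast
  consider "A = {}" | "card A = 1" | "card A > 1"
    by (metis One_nat_def card_0_eq fA less_one linorder_neqE_nat)
  then show ?thesis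
  proof cases
    case 1 then show ?thesis using assms by (simp add: rho_def codim_def)
  next
    case 2
    then obtain a where A: "A = {a}" by (auto simp: card_Suc_eq)
    show ?thesis
    proof (cases "a = b")
      case False
      hence "b \<subset> a" using assms A by auto
      moreover have "finite a" using Lset_elem assms A by blast
      ultimately have "card b < card a" by (rule psubset_card_mono[rotated])
      then show ?thesis using A by (simp add: rho_def codim_def)
    qed (use A in auto)
  next
    case 3
    hence ne: "A \<noteq> {}" by auto
    then obtain a where a: "a \<in> A" by auto
    have "b \<subseteq> \<Inter>A" using assms by auto
    moreover have "finite (\<Inter>A)" using a Lset_elem[OF assms(1) a] by (meson Inf_lower finite_subset)
    ultimately have "card b \<le> card (\<Inter>A)" by (rule card_mono[rotated])
    hence "codim d (\<Inter>A) \<le> codim d b" by (simp add: codim_def)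
    with rho_le_inter(2)[OF assms(1) ne 3] show ?thesis by simp
  qed
qed

lemma leq_cover:
  assumes S: "S \<in> Lset n d" and S': "S' \<in> Lset n d"
  shows "leqL d S S' \<longleftrightarrow> cover S S'"
proof
  assume "leqL d S S'"
  then show "cover S S'" unfolding leqL_def lessL_def cover_def by auto
next
  assume c: "cover S S'"
  show "leqL d S S'"
  proof (cases "S = S'")
    case True then show ?thesis by (simp add: leqL_def)
  next
    case False
    define P where "P b = {a\<in>S. b \<subseteq> a}" for b
    have fS: "finite S" "finite S'" using Lset_finite S S' by blast+
    have U: "S = (\<Union>b\<in>S'. P b)" using c unfolding cover_def P_def by blast
    have disj: "\<forall>i\<in>S'. \<forall>j\<in>S'. i \<noteq> j \<longrightarrow> P i \<inter> P j = {}"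
    proof (intro ballI impI)
      fix i j assume ij: "i \<in> S'" "j \<in> S'" "i \<noteq> j"
      show "P i \<inter> P j = {}"
      proof (rule ccontr)
        assume "P i \<inter> P j \<noteq> {}"
        then obtain a where "a \<in> S" "i \<subseteq> a" "j \<subseteq> a" unfolding P_def by auto
        then show False using Lset_uniq[OF S' ij(1,2)] Lset_elem[OF S] ij(3) by blast
      qed
    qed
    have "rho d S = (\<Sum>b\<in>S'. rho d (P b))"
      unfolding rho_def by (subst U, rule sum.UNION_disjoint) (use fS disj P_def in auto)
    also have "\<dots> < (\<Sum>b\<in>S'. codim d b)"
    proof (rule sum_strict_mono_ex1[OF fS(2)])
      have PL: "b \<in> S' \<Longrightarrow> P b = {b} \<or> rho d (P b) < codim d b" for b
        by (rule group_lemma[of _ n]) (use Lset_subset[OF S] Lset_elem[OF S'] in \<open>auto simp: P_def\<close>)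
      show "\<forall>b\<in>S'. rho d (P b) \<le> codim d b" using PL by (force simp: rho_def)
      show "\<exists>b\<in>S'. rho d (P b) < codim d b"
      proof (rule ccontr)
        assume "\<not> ?thesis"
        hence "\<forall>b\<in>S'. P b = {b}" using PL by auto
        hence "S = S'" using U by auto
        with False show False by simp
      qed
    qed
    finally have "rho d S < rho d S'" by (simp add: rho_def)
    then show ?thesis using c unfolding leqL_def lessL_def cover_def by auto
  qed
qed



lemma ideal_single:
  assumes "T \<in> Lset n d" "X \<in> T"
  shows "idealL n d {X} = {S \<in> Lset n d. \<forall>a\<in>S. X \<subseteq> a}"
proof -
  have "{X} \<in> Lset n d" using Lset_subset assms by blast
  then have "S \<in> Lset n d \<Longrightarrow> leqL d S {X} \<longleftrightarrow> (\<forall>a\<in>S. X \<subseteq> a)" for S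
    using leq_cover[of S n d "{X}"] by (simp add: cover_def)
  then show ?thesis unfolding idealL_def by auto
qed

lemma union_Lset:
  assumes T: "T \<in> Lset n d"
    and gL: "\<And>X. X \<in> T \<Longrightarrow> g X \<in> Lset n d"
    and gX: "\<And>X a. X \<in> T \<Longrightarrow> a \<in> g X \<Longrightarrow> X \<subseteq> a"
  shows "(\<Union>X\<in>T. g X) \<in> Lset n d"
proof -
  let ?S = "\<Union>X\<in>T. g X"
  have el: "a \<in> ?S \<Longrightarrow> a \<subseteq> {1..n} \<and> finite a \<and> card a \<le> d" for a
    using Lset_elem gL by blast
  have own: "a \<in> ?S \<Longrightarrow> X \<in> T \<Longrightarrow> X \<subseteq> a \<Longrightarrow> a \<in> g X" for a X
  proof -
    assume "a \<in> ?S" "X \<in> T" "X \<subseteq> a"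
    then obtain Y where Y: "Y \<in> T" "a \<in> g Y" by auto
    have "Y = X" using Lset_uniq[OF T Y(1) \<open>X\<in>T\<close>] gX[OF Y] \<open>X \<subseteq> a\<close> el[OF \<open>a\<in>?S\<close>] by blast
    then show "a \<in> g X" using Y by simp
  qed
  have D: "Dd d T' > 0" if T'S: "T' \<subseteq> ?S" and cT': "card T' > 1" for T'
  proof -
    have fT': "finite T'" using cT' by (intro card_ge_0_finite) simp
    have neT': "T' \<noteq> {}" using cT' by auto
    define A where "A = {X\<in>T. \<exists>a\<in>T'. X \<subseteq> a}"
    have fT: "finite T" using Lset_finite T by blast
    have fA: "finite A" using fT A_def by auto
    have AT: "A \<subseteq> T" using A_def by auto
    have memb: "\<exists>X\<in>A. X \<subseteq> a" if "a \<in> T'" for a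
    proof -
      from that T'S obtain X where "X \<in> T" "a \<in> g X" by blast
      then show ?thesis using gX that unfolding A_def by blast
    qed
    show ?thesis
    proof (cases "card A > 1")
      case False
      obtain a0 where "a0 \<in> T'" using neT' by auto
      then obtain X0 where X0: "X0 \<in> A" "X0 \<subseteq> a0" using memb by blast
      have "A = {X0}"
      proof -
        have "A \<noteq> {}" using X0 by auto
        with False fA have "card A = 1" by (metis One_nat_def card_0_eq less_one linorder_neqE_nat)
        then show ?thesis using X0(1) by (metis card_1_singletonE singletonD)
      qed
      have "T' \<subseteq> g X0"
      proof
        fix a assume "a \<in> T'"
        then obtain Y where "Y \<in> A" "Y \<subseteq> a" using memb by blast
        then have "Y = X0" using \<open>A = {X0}\<close> by auto
        then show "a \<in> g X0" using \<open>a\<in>T'\<close> T'S \<open>Y \<subseteq> a\<close> X0 AT by (intro own) auto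
      qed
      then show ?thesis using Lset_D[OF gL[OF subsetD[OF AT X0(1)]] _ cT'] by simp
    next
      case True
      have DA: "Dd d A > 0" using Lset_D[OF T AT True] .
      define P where "P X = {a\<in>T'. X \<subseteq> a}" for X
      have PL: "X \<in> A \<Longrightarrow> P X \<in> Lset n d" for X
      proof -
        assume X: "X \<in> A"
        have "P X \<subseteq> g X" unfolding P_def using X AT T'S by (auto intro: own)
        then show ?thesis using Lset_subset[OF gL[OF subsetD[OF AT X]]] by simp
      qed
      have Pne: "X \<in> A \<Longrightarrow> P X \<noteq> {}" for X unfolding P_def A_def by auto
      have U: "T' = (\<Union>X\<in>A. P X)" using memb unfolding P_def by blast
      have disj: "\<forall>i\<in>A. \<forall>j\<in>A. i \<noteq> j \<longrightarrow> P i \<inter> P j = {}"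
      proof (intro ballI impI)
        fix i j assume ij: "i \<in> A" "j \<in> A" "i \<noteq> j"
        show "P i \<inter> P j = {}"
        proof (rule ccontr)
          assume "P i \<inter> P j \<noteq> {}"
          then obtain a where "a \<in> T'" "i \<subseteq> a" "j \<subseteq> a" unfolding P_def by auto
          moreover have "finite a \<and> card a \<le> d" using el \<open>a \<in> T'\<close> T'S by blast
          ultimately show False using Lset_uniq[OF T, of i j a] ij AT by auto
        qed
      qed
      have rhoT': "rho d T' = (\<Sum>X\<in>A. rho d (P X))"
        unfolding rho_def by (subst U, rule sum.UNION_disjoint) (use fT' fA disj P_def in auto)
      have rhoP: "X \<in> A \<Longrightarrow> rho d (P X) \<le> codim d (\<Inter>(P X))" for X
        using rho_le_inter(1)[OF PL Pne] .
      have finI: "X \<in> A \<Longrightarrow> finite (\<Inter>(P X))" for X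
      proof -
        assume "X \<in> A"
        then obtain a where "a \<in> P X" using Pne by blast
        then have "a \<in> T'" unfolding P_def by simp
        then have "finite a" using el T'S by blast
        moreover have "\<Inter>(P X) \<subseteq> a" using \<open>a \<in> P X\<close> by (rule Inf_lower)
        ultimately show ?thesis by (rule finite_subset[rotated])
      qed
      have XsubP: "X \<in> A \<Longrightarrow> X \<subseteq> \<Inter>(P X)" for X unfolding P_def by auto
      obtain X0 where X0: "X0 \<in> A" using True by (metis card.empty ex_in_conv not_less_zero)
      have fX0: "finite X0" using Lset_elem[OF T, of X0] X0 AT by auto
      have finA: "finite (\<Inter>A)" using Inf_lower[OF X0] fX0 by (rule finite_subset)
      have sub: "\<Inter>T' \<subseteq> \<Inter>A \<union> (\<Union>X\<in>A. \<Inter>(P X) - X)"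
      proof
        fix w assume w: "w \<in> \<Inter>T'"
        show "w \<in> \<Inter>A \<union> (\<Union>X\<in>A. \<Inter>(P X) - X)"
        proof (cases "w \<in> \<Inter>A")
          case False
          then obtain X where "X \<in> A" "w \<notin> X" by auto
          moreover have "w \<in> \<Inter>(P X)" using w unfolding P_def by auto
          ultimately show ?thesis by blast
        qed simp
      qed
      have fU: "finite (\<Union>X\<in>A. \<Inter>(P X) - X)" using fA finI by auto
      have "card (\<Inter>T') \<le> card (\<Inter>A \<union> (\<Union>X\<in>A. \<Inter>(P X) - X))"
        by (rule card_mono[OF _ sub]) (use finA fU in auto)
      also have "\<dots> \<le> card (\<Inter>A) + card (\<Union>X\<in>A. \<Inter>(P X) - X)" by (rule card_Un_le)
      also have "card (\<Union>X\<in>A. \<Inter>(P X) - X) \<le> (\<Sum>X\<in>A. card (\<Inter>(P X) - X))"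
        by (rule card_UN_le[OF fA])
      finally have c1: "int (card (\<Inter>T')) \<le> int (card (\<Inter>A)) + (\<Sum>X\<in>A. int (card (\<Inter>(P X) - X)))"
        by (simp flip: of_nat_sum)
      have cd: "X \<in> A \<Longrightarrow> int (card (\<Inter>(P X) - X)) = codim d X - codim d (\<Inter>(P X))" for X
        using card_Diff_subset[of X "\<Inter>(P X)"] XsubP card_mono[OF finI XsubP] Lset_elem[OF T, of X] AT
        by (auto simp: codim_def)
      have c2: "(\<Sum>X\<in>A. int (card (\<Inter>(P X) - X))) = (\<Sum>X\<in>A. codim d X) - (\<Sum>X\<in>A. codim d (\<Inter>(P X)))"
        by (simp add: cd sum_subtractf)
      have "rho d T' \<le> (\<Sum>X\<in>A. codim d (\<Inter>(P X)))" unfolding rhoT' by (rule sum_mono) (rule rhoP)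
      moreover have "codim d (\<Inter>A) > (\<Sum>X\<in>A. codim d X)" using DA by (simp add: Dd_def rho_def)
      ultimately have "codim d (\<Inter>T') > rho d T'" using c1 c2 by (simp add: codim_def)
      then show ?thesis by (simp add: Dd_def)
    qed
  qed
  show ?thesis unfolding Lset_def using el D by blast
qed



lemma poset_iso_trans:
  assumes "poset_iso A ra B rb" "poset_iso B rb C rc"
  shows "poset_iso A ra C rc"
proof -
  obtain f where f: "bij_betw f A B" "\<forall>x\<in>A. \<forall>y\<in>A. ra x y \<longleftrightarrow> rb (f x) (f y)"
    using assms(1) unfolding poset_iso_def by blast
  obtain g where g: "bij_betw g B C" "\<forall>x\<in>B. \<forall>y\<in>B. rb x y \<longleftrightarrow> rc (g x) (g y)"
    using assms(2) unfolding poset_iso_def by blast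
  have "bij_betw (g \<circ> f) A C" using f(1) g(1) by (rule bij_betw_trans)
  moreover have "\<forall>x\<in>A. \<forall>y\<in>A. ra x y \<longleftrightarrow> rc ((g \<circ> f) x) ((g \<circ> f) y)"
    using f g bij_betwE[OF f(1)] by simp
  ultimately show ?thesis unfolding poset_iso_def by blast
qed

lemma poset_iso_PiE:
  assumes "\<And>i. i \<in> I \<Longrightarrow> poset_iso (A i) (r i) (B i) (s i)"
  shows "poset_iso (PiE I A) (prod_le I r) (PiE I B) (prod_le I s)"
proof -
  have "\<forall>i\<in>I. \<exists>f. bij_betw f (A i) (B i) \<and> (\<forall>x\<in>A i. \<forall>y\<in>A i. r i x y \<longleftrightarrow> s i (f x) (f y))"
    using assms unfolding poset_iso_def by blast
  then obtain f where f: "\<And>i. i \<in> I \<Longrightarrow> bij_betw (f i) (A i) (B i)"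
    "\<And>i. i \<in> I \<Longrightarrow> \<forall>x\<in>A i. \<forall>y\<in>A i. r i x y \<longleftrightarrow> s i (f i x) (f i y)"
    by metis
  define F where "F g = (\<lambda>i\<in>I. f i (g i))" for g
  define G where "G k = (\<lambda>i\<in>I. inv_into (A i) (f i) (k i))" for k
  have "bij_betw F (PiE I A) (PiE I B)"
  proof (rule bij_betw_byWitness[where f'=G])
    show "\<forall>a\<in>PiE I A. G (F a) = a"
    proof
      fix a assume a: "a \<in> PiE I A"
      show "G (F a) = a"
      proof
        fix i show "G (F a) i = a i"
        proof (cases "i \<in> I")
          case True
          then have "a i \<in> A i" using a by (simp add: PiE_mem)
          then show ?thesis using True f(1)[OF True] by (simp add: F_def G_def bij_betw_def inv_into_f_f)
        next
          case False
          then show ?thesis using PiE_arb[OF a False] by (simp add: G_def)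
        qed
      qed
    qed
    show "\<forall>a'\<in>PiE I B. F (G a') = a'"
    proof
      fix a assume a: "a \<in> PiE I B"
      show "F (G a) = a"
      proof
        fix i show "F (G a) i = a i"
        proof (cases "i \<in> I")
          case True
          then have "a i \<in> B i" using a by (simp add: PiE_mem)
          then show ?thesis using True f(1)[OF True] by (simp add: F_def G_def bij_betw_def f_inv_into_f)
        next
          case False
          then show ?thesis using PiE_arb[OF a False] by (simp add: F_def)
        qed
      qed
    qed
    show "F ` PiE I A \<subseteq> PiE I B"
    proof
      fix y assume "y \<in> F ` PiE I A"
      then obtain a where a: "a \<in> PiE I A" "y = F a" by blast
      have "i \<in> I \<Longrightarrow> f i (a i) \<in> B i" for i
        using f(1)[of i] PiE_mem[OF a(1), of i] by (auto simp: bij_betw_def)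
      then show "y \<in> PiE I B" unfolding a(2) F_def by auto
    qed
    show "G ` PiE I B \<subseteq> PiE I A"
      using f(1) by (auto simp: G_def bij_betw_def inv_into_into dest: PiE_mem)
  qed
  moreover have "\<forall>x\<in>PiE I A. \<forall>y\<in>PiE I A. prod_le I r x y \<longleftrightarrow> prod_le I s (F x) (F y)"
    using f(2) by (auto simp: prod_le_def F_def PiE_mem)
  ultimately show ?thesis unfolding poset_iso_def by blast
qed



lemma iso1:
  assumes T: "T \<in> Lset n d"
  shows "poset_iso (idealL n d T) (leqL d) (PiE T (\<lambda>X. idealL n d {X})) (prod_le T (\<lambda>X. leqL d))"
proof -
  have ideal: "idealL n d T = {S \<in> Lset n d. cover S T}"
    unfolding idealL_def using leq_cover[OF _ T] by auto
  have elT: "X \<in> T \<Longrightarrow> finite X \<and> card X \<le> d" for X using Lset_elem[OF T] by blast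
  define F where "F S = (\<lambda>X\<in>T. {a\<in>S. X \<subseteq> a})" for S
  define G where "G g = (\<Union>X\<in>T. g X)" for g :: "nat set \<Rightarrow> nat set set"
  have uniqS: "S \<in> Lset n d \<Longrightarrow> a \<in> S \<Longrightarrow> X \<in> T \<Longrightarrow> Y \<in> T \<Longrightarrow> X \<subseteq> a \<Longrightarrow> Y \<subseteq> a \<Longrightarrow> X = Y"
    for S a X Y using Lset_uniq[OF T, of X Y a] Lset_elem[of S n d a] by blast
  have FS: "S \<in> idealL n d T \<Longrightarrow> X \<in> T \<Longrightarrow> F S X \<in> Lset n d" for S X
    using Lset_subset[of S n d] unfolding F_def ideal by auto
  have bij: "bij_betw F (idealL n d T) (PiE T (\<lambda>X. idealL n d {X}))"
  proof (rule bij_betw_byWitness[where f'=G])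
    show "\<forall>a\<in>idealL n d T. G (F a) = a"
    proof
      fix S assume "S \<in> idealL n d T"
      then have c: "cover S T" using ideal by simp
      have "G (F S) = (\<Union>X\<in>T. {a\<in>S. X \<subseteq> a})" unfolding G_def F_def by simp
      also have "\<dots> = S" using c unfolding cover_def by blast
      finally show "G (F S) = S" .
    qed
    show "\<forall>g\<in>PiE T (\<lambda>X. idealL n d {X}). F (G g) = g"
    proof
      fix g assume g: "g \<in> PiE T (\<lambda>X. idealL n d {X})"
      have gi: "X \<in> T \<Longrightarrow> g X \<in> Lset n d \<and> (\<forall>a\<in>g X. X \<subseteq> a)" for X
        using g ideal_single[OF T, of X] by auto
      show "F (G g) = g"
      proof
        fix X show "F (G g) X = g X"
        proof (cases "X \<in> T")
          case False then show ?thesis using PiE_arb[OF g False] by (simp add: F_def)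
        next
          case X: True
          show ?thesis
        proof
          show "F (G g) X \<subseteq> g X"
          proof
            fix a assume "a \<in> F (G g) X"
            then obtain Y where Y: "Y \<in> T" "a \<in> g Y" "X \<subseteq> a" using X unfolding F_def G_def by auto
            then have "X = Y" using uniqS[of "g Y" a X Y] gi X by blast
            then show "a \<in> g X" using Y by simp
          qed
          show "g X \<subseteq> F (G g) X" using X gi unfolding F_def G_def by auto
        qed
        qed
      qed
    qed
    show "F ` idealL n d T \<subseteq> PiE T (\<lambda>X. idealL n d {X})"
    proof
      fix h assume "h \<in> F ` idealL n d T"
      then obtain S where S: "S \<in> idealL n d T" "h = F S" by blast
      show "h \<in> PiE T (\<lambda>X. idealL n d {X})"
        using S FS ideal_single[OF T] by (auto simp: F_def)
    qed
    show "G ` PiE T (\<lambda>X. idealL n d {X}) \<subseteq> idealL n d T"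
    proof
      fix S assume "S \<in> G ` PiE T (\<lambda>X. idealL n d {X})"
      then obtain g where g: "g \<in> PiE T (\<lambda>X. idealL n d {X})" "S = G g" by blast
      have gi: "X \<in> T \<Longrightarrow> g X \<in> Lset n d \<and> (\<forall>a\<in>g X. X \<subseteq> a)" for X
        using g ideal_single[OF T, of X] by auto
      have "S \<in> Lset n d" unfolding g(2) G_def by (rule union_Lset[OF T]) (use gi in auto)
      moreover have "cover S T" unfolding g(2) G_def cover_def using gi by blast
      ultimately show "S \<in> idealL n d T" unfolding ideal by simp
    qed
  qed
  have ord: "leqL d S S' \<longleftrightarrow> prod_le T (\<lambda>X. leqL d) (F S) (F S')"
    if S: "S \<in> idealL n d T" and S': "S' \<in> idealL n d T" for S S'
  proof -
    have SL: "S \<in> Lset n d" "S' \<in> Lset n d" "cover S T" "cover S' T" using S S' ideal by auto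
    have "prod_le T (\<lambda>X. leqL d) (F S) (F S') \<longleftrightarrow> (\<forall>X\<in>T. cover (F S X) (F S' X))"
      unfolding prod_le_def using leq_cover[OF FS[OF S] FS[OF S']] by auto
    also have "\<dots> \<longleftrightarrow> cover S S'"
    proof
      assume H: "\<forall>X\<in>T. cover (F S X) (F S' X)"
      show "cover S S'" unfolding cover_def
      proof
        fix a assume a: "a \<in> S"
        then obtain X where X: "X \<in> T" "X \<subseteq> a" using SL(3) unfolding cover_def by blast
        then have "a \<in> F S X" using a unfolding F_def by simp
        then obtain b where "b \<in> F S' X" "b \<subseteq> a" using H X unfolding cover_def by blast
        then show "\<exists>b\<in>S'. b \<subseteq> a" using X unfolding F_def by auto
      qed
    next
      assume H: "cover S S'"
      show "\<forall>X\<in>T. cover (F S X) (F S' X)"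
      proof (intro ballI)
        fix X assume X: "X \<in> T"
        show "cover (F S X) (F S' X)" unfolding cover_def
        proof
          fix a assume "a \<in> F S X"
          then have a: "a \<in> S" "X \<subseteq> a" using X unfolding F_def by auto
          then obtain b where b: "b \<in> S'" "b \<subseteq> a" using H unfolding cover_def by blast
          then obtain Y where Y: "Y \<in> T" "Y \<subseteq> b" using SL(4) unfolding cover_def by blast
          have "Y = X" using uniqS[OF SL(1) a(1) Y(1) X] Y b a by blast
          then have "b \<in> F S' X" using b Y X unfolding F_def by simp
          then show "\<exists>b\<in>F S' X. b \<subseteq> a" using b by blast
        qed
      qed
    qed
    also have "\<dots> \<longleftrightarrow> leqL d S S'" using leq_cover SL by blast
    finally show ?thesis by simp
  qed
  show ?thesis unfolding poset_iso_def using bij ord by blast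
qed



lemma comp_iso:
  assumes X: "X \<subseteq> {1..n}" "card X \<le> d"
  shows "poset_iso {S\<in>Lset n d. \<forall>a\<in>S. X \<subseteq> a} (leqL d)
           (Lset (n - card X) (d - card X)) (leqL (d - card X))"
proof -
  define n' where "n' = n - card X"
  define d' where "d' = d - card X"
  have fX: "finite X" using X(1) finite_subset by blast
  have "card ({1..n} - X) = card {1..n'}"
    using card_Diff_subset[OF fX X(1)] by (simp add: n'_def)
  then obtain h where h: "bij_betw h ({1..n} - X) {1..n'}"
    using finite_same_card_bij by blast
  have injh: "inj_on h ({1..n} - X)" and imh: "h ` ({1..n} - X) = {1..n'}"
    using h by (auto simp: bij_betw_def)
  define D1 where "D1 = {a. X \<subseteq> a \<and> a \<subseteq> {1..n}}"
  define \<phi> where "\<phi> a = h ` (a - X)" for a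
  have i: "a \<in> D1 \<Longrightarrow> \<phi> a \<subseteq> {1..n'}" for a
    unfolding \<phi>_def D1_def using imh by blast
  have iii: "\<phi> a \<subseteq> \<phi> b \<longleftrightarrow> a \<subseteq> b" if ab: "a \<in> D1" "b \<in> D1" for a b
  proof
    assume "a \<subseteq> b" then show "\<phi> a \<subseteq> \<phi> b" unfolding \<phi>_def by blast
  next
    assume sub: "\<phi> a \<subseteq> \<phi> b"
    show "a \<subseteq> b"
    proof
      fix x assume x: "x \<in> a"
      show "x \<in> b"
      proof (cases "x \<in> X")
        case True then show ?thesis using ab unfolding D1_def by blast
      next
        case False
        then have "h x \<in> \<phi> b" using sub x unfolding \<phi>_def by blast
        then obtain y where y: "y \<in> b - X" "h x = h y" unfolding \<phi>_def by blast
        have "x \<in> {1..n} - X" using x False ab unfolding D1_def by blast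
        moreover have "y \<in> {1..n} - X" using y ab unfolding D1_def by blast
        ultimately have "x = y" using injh y(2) by (meson inj_onD)
        then show ?thesis using y by simp
      qed
    qed
  qed
  have ii: "inj_on \<phi> D1"
    by (rule inj_onI) (metis iii subset_antisym order_refl)
  have finD1: "a \<in> D1 \<Longrightarrow> finite a" for a unfolding D1_def using finite_subset by blast
  have iv: "a \<in> D1 \<Longrightarrow> card (\<phi> a) = card a - card X" for a
  proof -
    assume a: "a \<in> D1"
    have "a - X \<subseteq> {1..n} - X" using a unfolding D1_def by blast
    then have "inj_on h (a - X)" using injh by (rule inj_on_subset[rotated])
    then have "card (\<phi> a) = card (a - X)" unfolding \<phi>_def by (rule card_image)
    also have "\<dots> = card a - card X" using a fX unfolding D1_def by (simp add: card_Diff_subset)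
    finally show ?thesis .
  qed
  have cXa: "a \<in> D1 \<Longrightarrow> card X \<le> card a" for a
    using finD1 unfolding D1_def by (simp add: card_mono)
  have codimeq: "a \<in> D1 \<Longrightarrow> codim d' (\<phi> a) = codim d a" for a
    using iv[of a] cXa[of a] X(2) by (simp add: codim_def d'_def of_nat_diff)
  have cardle: "a \<in> D1 \<Longrightarrow> card (\<phi> a) \<le> d' \<longleftrightarrow> card a \<le> d" for a
    using iv[of a] cXa[of a] X(2) unfolding d'_def by linarith
  have v: "\<phi> (\<Inter>U) = \<Inter>(\<phi> ` U)" "\<Inter>U \<in> D1" if U: "U \<subseteq> D1" "U \<noteq> {}" for U
  proof -
    show "\<Inter>U \<in> D1" using U unfolding D1_def by blast
    show "\<phi> (\<Inter>U) = \<Inter>(\<phi> ` U)"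
    proof
      show "\<phi> (\<Inter>U) \<subseteq> \<Inter>(\<phi> ` U)" unfolding \<phi>_def by blast
      show "\<Inter>(\<phi> ` U) \<subseteq> \<phi> (\<Inter>U)"
      proof
        fix y assume y: "y \<in> \<Inter>(\<phi> ` U)"
        obtain u0 where u0: "u0 \<in> U" using U by blast
        then obtain x0 where x0: "x0 \<in> u0 - X" "y = h x0" using y unfolding \<phi>_def by blast
        have x0n: "x0 \<in> {1..n} - X" using x0 u0 U unfolding D1_def by blast
        have "x0 \<in> u" if u: "u \<in> U" for u
        proof -
          obtain x where x: "x \<in> u - X" "y = h x" using y u unfolding \<phi>_def by blast
          have "x \<in> {1..n} - X" using x u U unfolding D1_def by blast
          then have "x = x0" using inj_onD[OF injh _ _ x0n] x0(2) x(2) by metis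
          then show ?thesis using x by simp
        qed
        then show "y \<in> \<phi> (\<Inter>U)" using x0 unfolding \<phi>_def by blast
      qed
    qed
  qed
  have vi: "\<exists>a\<in>D1. \<phi> a = c" if c: "c \<subseteq> {1..n'}" for c
  proof -
    define a where "a = X \<union> inv_into ({1..n} - X) h ` c"
    have invsub: "inv_into ({1..n} - X) h ` c \<subseteq> {1..n} - X"
    proof
      fix z assume "z \<in> inv_into ({1..n} - X) h ` c"
      then obtain w where w: "w \<in> c" "z = inv_into ({1..n} - X) h w" by blast
      have "w \<in> h ` ({1..n} - X)" using w(1) c imh by blast
      then show "z \<in> {1..n} - X" unfolding w(2) by (rule inv_into_into)
    qed
    have "a - X = inv_into ({1..n} - X) h ` c" using invsub unfolding a_def by blast
    then have "\<phi> a = c" unfolding \<phi>_def using image_inv_into_cancel[OF imh c] by simp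
    moreover have "a \<in> D1" using invsub X(1) unfolding a_def D1_def by blast
    ultimately show ?thesis by blast
  qed
  have cardU: "U \<subseteq> D1 \<Longrightarrow> card (\<phi> ` U) = card U" for U
    using card_image inj_on_subset[OF ii] by blast
  have DdEq: "Dd d' (\<phi> ` U) = Dd d U" if U: "U \<subseteq> D1" "U \<noteq> {}" for U
  proof -
    have "rho d' (\<phi> ` U) = (\<Sum>a\<in>U. codim d' (\<phi> a))"
      unfolding rho_def by (simp add: sum.reindex[OF inj_on_subset[OF ii U(1)]])
    also have "\<dots> = rho d U" unfolding rho_def
      by (rule sum.cong) (use codimeq U(1) in auto)
    finally have "rho d' (\<phi> ` U) = rho d U" .
    moreover have "codim d' (\<Inter>(\<phi> ` U)) = codim d (\<Inter>U)"
      using codimeq[OF v(2)[OF U]] v(1)[OF U] by simp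
    ultimately show ?thesis unfolding Dd_def by simp
  qed
  have transfer: "S \<in> Lset n d \<longleftrightarrow> \<phi> ` S \<in> Lset n' d'" if S: "S \<subseteq> D1" for S
  proof
    assume L: "S \<in> Lset n d"
    have P: "\<phi> ` S \<subseteq> Pow {1..n'}"
    proof
      fix c assume "c \<in> \<phi> ` S"
      then obtain a where a: "a \<in> S" "c = \<phi> a" by blast
      then show "c \<in> Pow {1..n'}" using i[of a] S by auto
    qed
    have C: "\<forall>c\<in>\<phi> ` S. card c \<le> d'"
    proof
      fix c assume "c \<in> \<phi> ` S"
      then obtain a where a: "a \<in> S" "c = \<phi> a" by blast
      then show "card c \<le> d'" using cardle[of a] S Lset_elem[OF L a(1)] by auto
    qed
    have D: "Dd d' T'' > 0" if T'': "T'' \<subseteq> \<phi> ` S" "card T'' > 1" for T''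
    proof -
      define U where "U = {a\<in>S. \<phi> a \<in> T''}"
      have img: "\<phi> ` U = T''"
      proof
        show "\<phi> ` U \<subseteq> T''" unfolding U_def by auto
        show "T'' \<subseteq> \<phi> ` U"
        proof
          fix c assume c: "c \<in> T''"
          then obtain a where "a \<in> S" "c = \<phi> a" using T''(1) by blast
          then show "c \<in> \<phi> ` U" using c unfolding U_def by blast
        qed
      qed
      have US: "U \<subseteq> D1" using S U_def by blast
      have cU: "card U > 1" using cardU[OF US] img T''(2) by simp
      then have "U \<noteq> {}" by auto
      have "Dd d U > 0" using Lset_D[OF L _ cU] U_def by blast
      then show ?thesis using DdEq[OF US \<open>U \<noteq> {}\<close>] img by simp
    qed
    show "\<phi> ` S \<in> Lset n' d'" unfolding Lset_def using P C D by simp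
  next
    assume L: "\<phi> ` S \<in> Lset n' d'"
    have P: "S \<subseteq> Pow {1..n}" using S unfolding D1_def by blast
    have C: "\<forall>c\<in>S. card c \<le> d"
    proof
      fix a assume a: "a \<in> S"
      then have "\<phi> a \<in> \<phi> ` S" by blast
      then show "card a \<le> d" using cardle[of a] S Lset_elem[OF L] a by auto
    qed
    have D: "Dd d T' > 0" if T': "T' \<subseteq> S" "card T' > 1" for T'
    proof -
      have US: "T' \<subseteq> D1" using S T' by blast
      have "card (\<phi> ` T') > 1" using cardU[OF US] T'(2) by simp
      then have "Dd d' (\<phi> ` T') > 0" using Lset_D[OF L] T'(1) by blast
      moreover have "T' \<noteq> {}" using T'(2) by auto
      ultimately show ?thesis using DdEq[OF US] by simp
    qed
    show "S \<in> Lset n d" unfolding Lset_def using P C D by simp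
  qed
  define Iset where "Iset = {S\<in>Lset n d. \<forall>a\<in>S. X \<subseteq> a}"
  have ID1: "S \<in> Iset \<Longrightarrow> S \<subseteq> D1" for S
    unfolding Iset_def D1_def using Lset_elem[of S n d] by auto
  have bij: "bij_betw (image \<phi>) Iset (Lset n' d')"
  proof (rule bij_betw_imageI)
    show "inj_on (image \<phi>) Iset"
    proof (rule inj_onI)
      fix S S' assume "S \<in> Iset" "S' \<in> Iset" "\<phi> ` S = \<phi> ` S'"
      then show "S = S'" using inj_on_image_eq_iff[OF ii ID1 ID1] by blast
    qed
    show "image \<phi> ` Iset = Lset n' d'"
    proof
      show "image \<phi> ` Iset \<subseteq> Lset n' d'"
      proof
        fix R assume "R \<in> image \<phi> ` Iset"
        then obtain S where S: "S \<in> Iset" "R = \<phi> ` S" by blast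
        then have "S \<in> Lset n d" unfolding Iset_def by simp
        then show "R \<in> Lset n' d'" using transfer[OF ID1[OF S(1)]] S(2) by simp
      qed
      show "Lset n' d' \<subseteq> image \<phi> ` Iset"
      proof
        fix R assume R: "R \<in> Lset n' d'"
        define S where "S = {a\<in>D1. \<phi> a \<in> R}"
        have "\<phi> ` S = R"
        proof
          show "\<phi> ` S \<subseteq> R" unfolding S_def by blast
          show "R \<subseteq> \<phi> ` S"
          proof
            fix c assume "c \<in> R"
            then have "c \<subseteq> {1..n'}" using Lset_elem[OF R] by blast
            then obtain a where "a \<in> D1" "\<phi> a = c" using vi by blast
            then show "c \<in> \<phi> ` S" unfolding S_def using \<open>c \<in> R\<close> by blast
          qed
        qed
        moreover have "S \<subseteq> D1" unfolding S_def by blast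
        ultimately have "S \<in> Lset n d" using transfer R by blast
        then have "S \<in> Iset" unfolding Iset_def S_def D1_def by blast
        then show "R \<in> image \<phi> ` Iset" using \<open>\<phi> ` S = R\<close> by blast
      qed
    qed
  qed
  have ord: "leqL d S S' \<longleftrightarrow> leqL d' (\<phi> ` S) (\<phi> ` S')" if S: "S \<in> Iset" "S' \<in> Iset" for S S'
  proof -
    have L: "S \<in> Lset n d" "S' \<in> Lset n d" using S Iset_def by auto
    have L': "\<phi> ` S \<in> Lset n' d'" "\<phi> ` S' \<in> Lset n' d'" using transfer ID1 L S by blast+
    have "cover S S' \<longleftrightarrow> cover (\<phi> ` S) (\<phi> ` S')"
    proof -
      have "\<forall>a\<in>S. \<forall>b\<in>S'. \<phi> b \<subseteq> \<phi> a \<longleftrightarrow> b \<subseteq> a" using iii ID1 S by blast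
      then show ?thesis unfolding cover_def by (simp add: Bex_def) (meson)
    qed
    then show ?thesis using leq_cover[OF L] leq_cover[OF L'] by simp
  qed
  have "\<exists>f. bij_betw f Iset (Lset n' d') \<and> (\<forall>x\<in>Iset. \<forall>y\<in>Iset. leqL d x y \<longleftrightarrow> leqL d' (f x) (f y))"
    using bij ord by blast
  then show ?thesis unfolding poset_iso_def Iset_def n'_def d'_def .
qed


theorem theorem3p1:
  fixes n d :: nat and T :: "nat set set"
  assumes "d < n" and "T \<in> Lset n d" and "T \<noteq> {}"
  shows "poset_iso (idealL n d T) (leqL d)
           (PiE T (\<lambda>X. idealL n d {X})) (prod_le T (\<lambda>X. leqL d))
       \<and> poset_iso (idealL n d T) (leqL d)
           (PiE T (\<lambda>X. Lset (n - card X) (d - card X))) (prod_le T (\<lambda>X. leqL (d - card X)))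
       \<and> poset_iso (PiE T (\<lambda>X. idealL n d {X})) (prod_le T (\<lambda>X. leqL d))
           (PiE T (\<lambda>X. Lset (n - card X) (d - card X))) (prod_le T (\<lambda>X. leqL (d - card X)))"
proof -
  have P1: "poset_iso (idealL n d T) (leqL d) (PiE T (\<lambda>X. idealL n d {X})) (prod_le T (\<lambda>X. leqL d))"
    by (rule iso1[OF assms(2)])
  have P3: "poset_iso (PiE T (\<lambda>X. idealL n d {X})) (prod_le T (\<lambda>X. leqL d))
           (PiE T (\<lambda>X. Lset (n - card X) (d - card X))) (prod_le T (\<lambda>X. leqL (d - card X)))"
  proof (rule poset_iso_PiE)
    fix X assume X: "X \<in> T"
    have "X \<subseteq> {1..n}" "card X \<le> d" using Lset_elem[OF assms(2) X] by auto
    from comp_iso[OF this] show "poset_iso (idealL n d {X}) (leqL d) (Lset (n - card X) (d - card X)) (leqL (d - card X))"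
      unfolding ideal_single[OF assms(2) X] .
  qed
  show ?thesis using P1 P3 poset_iso_trans[OF P1 P3] by blast
qed

end
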